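(* Let $M\subset\mathbb{CP}^n$ be a smooth hypersurface defined by a homogeneous polynomial $F$ of degree $d$. Work in the affine chart $Z_0\neq0$ with coordinates $z_i=Z_i/Z_0$, $i=1,\dots,n$, let $f(z)=F(1,z_1,\dots,z_n)$, and on an open set where $\partial f/\partial z_1\ne0$ write $M$ locally as a graph $z_1=z_1(z_2,\dots,z_n)$ with $z_1$ holomorphic in $(z_2,\dots,z_n)$; put $a_i=\partial z_1/\partial z_i$ ($2\le i\le n$), $|z|^2=\sum_{i=1}^n|z_i|^2$, $|a|^2=\sum_{i=2}^n|a_i|^2$, $F_k=\frac{\partial F}{\partial Z_k}$ evaluated at $(1,z_1,\dots,z_n)$, and $\rho=\frac{\sum_{k=0}^n|F_k|^2}{(1+|z|^2)|F_1|^2}$. The restriction of the Fubini–Study form to $M$ is $\omega=\frac{\sqrt{-1}}{2\pi}\sum_{i,j=2}^n\tilde g_{i\bar j}dz_i\wedge d\bar z_j$ with $$\tilde g_{i\bar j}=\frac{\delta_{ij}+a_i\bar a_j}{1+|z|^2}-\frac{(\bar z_i+\bar z_1a_i)(z_j+z_1\bar a_j)}{(1+|z|^2)^2}.$$ Then the inverse matrix $\tilde g^{i\bar j}$ (characterized by $\sum_{j=2}^n\tilde g_{i\bar j}\tilde g^{k\bar j}=\delta_{ik}$) is $$\tilde g^{i\bar j}=\frac1\rho\Big(\rho(1+|z|^2)\delta_{ji}-a_j\bar a_i+\bar z_jz_i(1+|a|^2)\Big)-\frac1\rho\Big(a_jz_i\big(\textstyle\sum_{k=2}^n\bar a_k\bar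 z_k-\bar z_1\big)+\bar z_j\bar a_i\big(\sum_{k=2}^na_kz_k-z_1\big)\Big).$$
   Context: The Fubini–Study form on $\mathbb{CP}^n$ is $\omega_{FS}=\frac{\sqrt{-1}}{2\pi}\partial\bar\partial\log\sum_{k=0}^n|Z_k|^2$. *)

theory Defs
  imports "HOL-Analysis.Analysis"
begin

text \<open>Homogeneous coordinates on CP^n are (Z0, Z1, W) where W :: complex^'m collects
  Z2..Zn (so n = CARD('m) + 1).  A polynomial is given by a finite set S of exponent
  vectors (exponent of Z0, exponent of Z1, exponents of the W-coordinates) and coefficients c.\<close>

definition hpoly ::
  "(nat \<times> nat \<times> ('m::finite \<Rightarrow> nat)) set \<Rightarrow> (nat \<times> nat \<times> ('m \<Rightarrow> nat) \<Rightarrow> complex)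
   \<Rightarrow> complex \<Rightarrow> complex \<Rightarrow> complex^'m \<Rightarrow> complex" where
  "hpoly S c Z0 Z1 W =
     (\<Sum>e\<in>S. c e * Z0 ^ fst e * Z1 ^ fst (snd e) * (\<Prod>i\<in>UNIV. (W$i) ^ snd (snd e) i))"

definition homogeneous_deg :: "(nat \<times> nat \<times> ('m::finite \<Rightarrow> nat)) set \<Rightarrow> nat \<Rightarrow> bool" where
  "homogeneous_deg S d \<longleftrightarrow> finite S \<and> (\<forall>e\<in>S. fst e + fst (snd e) + sum (snd (snd e)) UNIV = d)"

definition vupd :: "'a^'m \<Rightarrow> 'm \<Rightarrow> 'a \<Rightarrow> 'a^'m" where
  "vupd w i t = (\<chi> j. if j = i then t else w$j)"

definition dZ0 :: "(complex \<Rightarrow> complex \<Rightarrow> complex^'m \<Rightarrow> complex) \<Rightarrow> complex \<Rightarrow> complex \<Rightarrow> complex^'m \<Rightarrow> complex" where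
  "dZ0 F Z0 Z1 W = deriv (\<lambda>t. F t Z1 W) Z0"
definition dZ1 :: "(complex \<Rightarrow> complex \<Rightarrow> complex^'m \<Rightarrow> complex) \<Rightarrow> complex \<Rightarrow> complex \<Rightarrow> complex^'m \<Rightarrow> complex" where
  "dZ1 F Z0 Z1 W = deriv (\<lambda>t. F Z0 t W) Z1"
definition dW :: "(complex \<Rightarrow> complex \<Rightarrow> complex^'m \<Rightarrow> complex) \<Rightarrow> complex \<Rightarrow> complex \<Rightarrow> complex^'m \<Rightarrow> 'm \<Rightarrow> complex" where
  "dW F Z0 Z1 W k = deriv (\<lambda>t. F Z0 Z1 (vupd W k t)) (W$k)"

definition smooth_hypersurface :: "(complex \<Rightarrow> complex \<Rightarrow> complex^'m \<Rightarrow> complex) \<Rightarrow> bool" where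
  "smooth_hypersurface F \<longleftrightarrow>
     (\<forall>Z0 Z1 W. (Z0, Z1, W) \<noteq> (0, 0, 0) \<and> F Z0 Z1 W = 0 \<longrightarrow>
        dZ0 F Z0 Z1 W \<noteq> 0 \<or> dZ1 F Z0 Z1 W \<noteq> 0 \<or> (\<exists>k. dW F Z0 Z1 W k \<noteq> 0))"

definition holomorphic_several :: "(complex^'m) set \<Rightarrow> (complex^'m \<Rightarrow> complex) \<Rightarrow> bool" where
  "holomorphic_several U g \<longleftrightarrow> open U \<and>
     (\<forall>w\<in>U. \<exists>L. (g has_derivative L) (at w) \<and> (\<forall>\<zeta> v. L (\<zeta> *s v) = \<zeta> * L v))"

end

theory Submission
  imports Defs
begin



definition mono_rest :: "('m::finite \<Rightarrow> nat) \<Rightarrow> complex^'m \<Rightarrow> 'm \<Rightarrow> complex" where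
  "mono_rest q W k = (\<Prod>j\<in>UNIV-{k}. (W$j) ^ q j)"

definition P0 where
  "P0 S c Z0 Z1 (W::complex^'m::finite) = (\<Sum>e\<in>S. c e * (of_nat (fst e) * Z0 ^ (fst e - 1)) * Z1 ^ fst (snd e) * (\<Prod>i\<in>UNIV. (W$i) ^ snd (snd e) i))"
definition P1 where
  "P1 S c Z0 Z1 (W::complex^'m::finite) = (\<Sum>e\<in>S. c e * Z0 ^ fst e * (of_nat (fst (snd e)) * Z1 ^ (fst (snd e) - 1)) * (\<Prod>i\<in>UNIV. (W$i) ^ snd (snd e) i))"
definition PW where
  "PW S c Z0 Z1 (W::complex^'m::finite) k = (\<Sum>e\<in>S. c e * Z0 ^ fst e * Z1 ^ fst (snd e) * (of_nat (snd (snd e) k) * (W$k) ^ (snd (snd e) k - 1) * mono_rest (snd (snd e)) W k))"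

lemma prod_split: "(\<Prod>i\<in>UNIV. (W$i) ^ q i) = (W$k)^(q k) * mono_rest q W (k::'m::finite)"
  unfolding mono_rest_def by (simp add: prod.remove)

lemma mono_rest_vupd[simp]: "mono_rest q (vupd W k t) k = mono_rest q W k"
  unfolding mono_rest_def vupd_def by (intro prod.cong) auto

lemma vupd_nth[simp]: "vupd W k t $ k = t" unfolding vupd_def by simp
lemma vupd_same[simp]: "vupd W k (W$k) = W" unfolding vupd_def by (simp add: vec_eq_iff)

lemma hpoly_deriv:
  fixes S :: "(nat \<times> nat \<times> ('m::finite \<Rightarrow> nat)) set"
  assumes fin: "finite S"
    and d0: "(f0 has_field_derivative D0) (at t)"
    and d1: "(f1 has_field_derivative D1) (at t)"
    and d2: "(f2 has_field_derivative D2) (at t)"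
  shows "((\<lambda>x. hpoly S c (f0 x) (f1 x) (vupd W k (f2 x))) has_field_derivative
     (P0 S c (f0 t) (f1 t) (vupd W k (f2 t)) * D0 + P1 S c (f0 t) (f1 t) (vupd W k (f2 t)) * D1
      + PW S c (f0 t) (f1 t) (vupd W k (f2 t)) k * D2)) (at t)"
proof -
  have eq: "hpoly S c (f0 x) (f1 x) (vupd W k (f2 x)) =
     (\<Sum>e\<in>S. c e * f0 x ^ fst e * f1 x ^ fst (snd e) * ((f2 x)^(snd (snd e) k) * mono_rest (snd (snd e)) W k))" for x
    unfolding hpoly_def by (intro sum.cong refl) (simp add: prod_split[of _ _ k])
  have rhs: "P0 S c (f0 t) (f1 t) (vupd W k (f2 t)) * D0 + P1 S c (f0 t) (f1 t) (vupd W k (f2 t)) * D1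
      + PW S c (f0 t) (f1 t) (vupd W k (f2 t)) k * D2 =
     (\<Sum>e\<in>S. c e * (of_nat (fst e) * f0 t ^ (fst e - 1)) * D0 * f1 t ^ fst (snd e) * ((f2 t)^(snd (snd e) k) * mono_rest (snd (snd e)) W k)
       + c e * f0 t ^ fst e * (of_nat (fst (snd e)) * f1 t ^ (fst (snd e) - 1)) * D1 * ((f2 t)^(snd (snd e) k) * mono_rest (snd (snd e)) W k)
       + c e * f0 t ^ fst e * f1 t ^ fst (snd e) * (of_nat (snd (snd e) k) * (f2 t) ^ (snd (snd e) k - 1) * D2 * mono_rest (snd (snd e)) W k))"
    unfolding P0_def P1_def PW_def sum_distrib_right sum.distrib[symmetric]
    by (intro sum.cong refl) (simp add: prod_split[of _ _ k] algebra_simps)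
  show ?thesis
    unfolding eq rhs
    apply (rule DERIV_sum)
    apply (rule derivative_eq_intros DERIV_power d0 d1 d2 refl)+
    apply (simp add: algebra_simps)
    done
qed

lemma pw1: "x * (of_nat q * x^(q-1)) = of_nat q * (x::complex)^q" by (cases q) auto

lemma euler:
  fixes S :: "(nat \<times> nat \<times> ('m::finite \<Rightarrow> nat)) set"
  assumes hom: "homogeneous_deg S d"
  shows "Z0 * P0 S c Z0 Z1 W + Z1 * P1 S c Z0 Z1 W + (\<Sum>k\<in>UNIV. W$k * PW S c Z0 Z1 W k)
     = of_nat d * hpoly S c Z0 Z1 W"
proof -
  have fin: "finite S" and deg: "\<And>e. e \<in> S \<Longrightarrow> fst e + fst (snd e) + sum (snd (snd e)) UNIV = d"
    using hom unfolding homogeneous_deg_def by auto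
  have A: "(\<Sum>k\<in>UNIV. W$k * PW S c Z0 Z1 W k) = (\<Sum>e\<in>S. c e * Z0 ^ fst e * Z1 ^ fst (snd e)
      * (of_nat (sum (snd (snd e)) UNIV) * (\<Prod>i\<in>UNIV. (W$i) ^ snd (snd e) i)))"
  proof -
    have "(\<Sum>k\<in>UNIV. W$k * PW S c Z0 Z1 W k) = (\<Sum>e\<in>S. \<Sum>k\<in>UNIV. W$k * (c e * Z0 ^ fst e * Z1 ^ fst (snd e) * (of_nat (snd (snd e) k) * (W$k) ^ (snd (snd e) k - 1) * mono_rest (snd (snd e)) W k)))"
      unfolding PW_def sum_distrib_left by (rule sum.swap)
    also have "\<dots> = (\<Sum>e\<in>S. \<Sum>k\<in>UNIV. c e * Z0 ^ fst e * Z1 ^ fst (snd e) * (of_nat (snd (snd e) k) * (\<Prod>i\<in>UNIV. (W$i) ^ snd (snd e) i)))"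
    proof (intro sum.cong refl)
      fix e :: "nat \<times> nat \<times> ('m \<Rightarrow> nat)" and k
      have "W$k * (of_nat (snd (snd e) k) * (W$k) ^ (snd (snd e) k - 1)) = of_nat (snd (snd e) k) * (W$k) ^ (snd (snd e) k)"
        by (rule pw1)
      then show "W$k * (c e * Z0 ^ fst e * Z1 ^ fst (snd e) * (of_nat (snd (snd e) k) * (W$k) ^ (snd (snd e) k - 1) * mono_rest (snd (snd e)) W k))
        = c e * Z0 ^ fst e * Z1 ^ fst (snd e) * (of_nat (snd (snd e) k) * (\<Prod>i\<in>UNIV. (W$i) ^ snd (snd e) i))"
        unfolding prod_split[of W _ k] by (simp add: algebra_simps) blast
    qed
    also have "\<dots> = (\<Sum>e\<in>S. c e * Z0 ^ fst e * Z1 ^ fst (snd e)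
      * (of_nat (sum (snd (snd e)) UNIV) * (\<Prod>i\<in>UNIV. (W$i) ^ snd (snd e) i)))"
      by (simp add: sum_distrib_left sum_distrib_right of_nat_sum)
    finally show ?thesis .
  qed
  have "Z0 * P0 S c Z0 Z1 W + Z1 * P1 S c Z0 Z1 W + (\<Sum>k\<in>UNIV. W$k * PW S c Z0 Z1 W k)
     = (\<Sum>e\<in>S. c e * Z0 ^ fst e * Z1 ^ fst (snd e) * (\<Prod>i\<in>UNIV. (W$i) ^ snd (snd e) i) *
         (of_nat (fst e) + of_nat (fst (snd e)) + of_nat (sum (snd (snd e)) UNIV)))"
    unfolding A P0_def P1_def sum_distrib_left sum.distrib[symmetric]
  proof (intro sum.cong refl)
    fix e :: "nat \<times> nat \<times> ('m \<Rightarrow> nat)"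
    show "Z0 * (c e * (of_nat (fst e) * Z0 ^ (fst e - 1)) * Z1 ^ fst (snd e) * (\<Prod>i\<in>UNIV. (W$i) ^ snd (snd e) i)) +
        Z1 * (c e * Z0 ^ fst e * (of_nat (fst (snd e)) * Z1 ^ (fst (snd e) - 1)) * (\<Prod>i\<in>UNIV. (W$i) ^ snd (snd e) i)) +
        c e * Z0 ^ fst e * Z1 ^ fst (snd e) * (of_nat (sum (snd (snd e)) UNIV) * (\<Prod>i\<in>UNIV. (W$i) ^ snd (snd e) i)) =
        c e * Z0 ^ fst e * Z1 ^ fst (snd e) * (\<Prod>i\<in>UNIV. (W$i) ^ snd (snd e) i) *
        (of_nat (fst e) + of_nat (fst (snd e)) + of_nat (sum (snd (snd e)) UNIV))"
    proof -
      let ?c = "c e" and ?P = "(\<Prod>i\<in>UNIV. (W$i) ^ snd (snd e) i)" and ?p0 = "fst e" and ?p1 = "fst (snd e)"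
      have "Z0 * (?c * (of_nat ?p0 * Z0 ^ (?p0 - 1)) * Z1 ^ ?p1 * ?P) = ?c * Z1 ^ ?p1 * ?P * (Z0 * (of_nat ?p0 * Z0 ^ (?p0 - 1)))"
        by (simp only: mult_ac)
      also have "\<dots> = ?c * Z1 ^ ?p1 * ?P * (of_nat ?p0 * Z0 ^ ?p0)" by (simp only: pw1)
      finally have h1: "Z0 * (?c * (of_nat ?p0 * Z0 ^ (?p0 - 1)) * Z1 ^ ?p1 * ?P) = ?c * Z1 ^ ?p1 * ?P * (of_nat ?p0 * Z0 ^ ?p0)" .
      have "Z1 * (?c * Z0 ^ ?p0 * (of_nat ?p1 * Z1 ^ (?p1 - 1)) * ?P) = ?c * Z0 ^ ?p0 * ?P * (Z1 * (of_nat ?p1 * Z1 ^ (?p1 - 1)))"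
        by (simp only: mult_ac)
      also have "\<dots> = ?c * Z0 ^ ?p0 * ?P * (of_nat ?p1 * Z1 ^ ?p1)" by (simp only: pw1)
      finally have h2: "Z1 * (?c * Z0 ^ ?p0 * (of_nat ?p1 * Z1 ^ (?p1 - 1)) * ?P) = ?c * Z0 ^ ?p0 * ?P * (of_nat ?p1 * Z1 ^ ?p1)" .
      show ?thesis unfolding h1 h2 by (simp add: algebra_simps)
    qed
  qed
  also have "\<dots> = (\<Sum>e\<in>S. c e * Z0 ^ fst e * Z1 ^ fst (snd e) * (\<Prod>i\<in>UNIV. (W$i) ^ snd (snd e) i) * of_nat d)"
    proof (intro sum.cong refl)
    fix e assume "e \<in> S"
    then have "of_nat (fst e) + of_nat (fst (snd e)) + of_nat (sum (snd (snd e)) UNIV) = (of_nat d :: complex)"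
      using deg by (metis of_nat_add)
    then show "c e * Z0 ^ fst e * Z1 ^ fst (snd e) * (\<Prod>i\<in>UNIV. (W$i) ^ snd (snd e) i) *
         (of_nat (fst e) + of_nat (fst (snd e)) + of_nat (sum (snd (snd e)) UNIV)) = c e * Z0 ^ fst e * Z1 ^ fst (snd e) * (\<Prod>i\<in>UNIV. (W$i) ^ snd (snd e) i) * of_nat d"
      by simp
  qed
  also have "\<dots> = of_nat d * hpoly S c Z0 Z1 W"
    unfolding hpoly_def sum_distrib_left by (simp add: mult_ac)
  finally show ?thesis .
qed



lemma scal:
  fixes N \<rho> nw na z zb t tb ai wbi akb wk :: complex
  assumes N: "N \<noteq> 0" and r: "\<rho> \<noteq> 0" and hnw: "nw = N - 1 - z*zb"
    and hr: "\<rho>*N = 1 + na + (t - z)*(tb - zb)"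
  defines "u \<equiv> wbi + zb*ai"
  defines "mu \<equiv> ai/N - u*z/N^2" and "nu \<equiv> - u/N^2"
  defines "be \<equiv> (- akb - wk*(tb - zb))/\<rho>" and "ga \<equiv> (wk*(1+na) - akb*(t - z))/\<rho>"
  shows "(1/N)*(ai*be + wbi*ga) + mu*akb*N + mu*be*na + mu*ga*tb + nu*wk*N + nu*be*t + nu*ga*nw = 0"
proof -
  have "na = \<rho>*N - 1 - (t - z)*(tb - zb)" using hr by simp
  show ?thesis unfolding u_def mu_def nu_def be_def ga_def hnw \<open>na = _\<close>
    using N r by (simp add: field_simps) algebra
qed

lemma ifm1: "(if b then X else 0) * y = (if b then X * y else (0::complex))" by simp
lemma ifm2: "y * (if b then X else 0) = (if b then y * X else (0::complex))" by simp
lemma sh1: "(\<Sum>j\<in>(UNIV::'m::finite set). (if i = j then X else 0) * (if j = k then P else (0::complex))) = (if i = k then X*P else 0)"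
  by (simp add: ifm1 ifm2 sum.delta)
lemma sh2: "(\<Sum>j\<in>(UNIV::'m::finite set). (if i = j then X else 0) * (Z j * c)) = X * Z i * (c::complex)"
  by (simp add: ifm1 ifm2 sum.delta)
lemma sh3: "(\<Sum>j\<in>(UNIV::'m::finite set). (Y j * m) * (if j = k then P else 0)) = m * Y k * (P::complex)"
  by (simp add: ifm1 ifm2 sum.delta)
lemma sh4: "(\<Sum>j\<in>(UNIV::'m::finite set). (Y j * m) * (Z j * c)) = m * c * (\<Sum>j\<in>UNIV. Y j * (Z j::complex))"
  by (simp add: sum_distrib_left mult_ac)

lemma sum9:
  fixes Y1 Y2 Z1 Z2 :: "'m::finite \<Rightarrow> complex"
  shows "(\<Sum>j\<in>UNIV. ((if i = j then X else 0) + Y1 j * mu + Y2 j * nu) * ((if j = k then P else 0) + Z1 j * be + Z2 j * ga))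
   = (if i = k then X*P else 0) + X*Z1 i*be + X*Z2 i*ga + mu*Y1 k*P + mu*be*(\<Sum>j\<in>UNIV. Y1 j*Z1 j)
     + mu*ga*(\<Sum>j\<in>UNIV. Y1 j*Z2 j) + nu*Y2 k*P + nu*be*(\<Sum>j\<in>UNIV. Y2 j*Z1 j) + nu*ga*(\<Sum>j\<in>UNIV. Y2 j*Z2 j)"
  by (simp only: distrib_left distrib_right sum.distrib sh1 sh2 sh3 sh4) (simp add: algebra_simps)

lemma norm_axis_c: "norm (axis i (x::complex) :: complex^'m::finite) = norm x"
proof -
  have "(\<Sum>j\<in>UNIV. (norm (axis i x $ j))\<^sup>2) = (norm x)\<^sup>2"
  proof -
    have "(\<Sum>j\<in>UNIV. (norm (axis i x $ j))\<^sup>2) = (\<Sum>j\<in>UNIV. if j = i then (norm x)\<^sup>2 else 0)"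
      by (intro sum.cong refl) (simp add: axis_def)
    then show ?thesis by simp
  qed
  then show ?thesis by (simp add: norm_vec_def L2_set_def)
qed

lemma bl_axis: "bounded_linear (\<lambda>t::complex. axis i t :: complex^'m::finite)"
  by (rule bounded_linear_intro[where K=1]) (auto simp: vec_eq_iff axis_def norm_axis_c[unfolded axis_def])

lemma vupd_axis: fixes w :: "complex^'m::finite" shows "vupd w i t = (w - axis i (w$i)) + axis i t"
  by (auto simp: vec_eq_iff vupd_def axis_def)

lemma vupd_deriv: fixes w :: "complex^'m::finite" shows "((\<lambda>t. vupd w i t) has_derivative (\<lambda>t. axis i t)) (at x)"
proof -
  have "((\<lambda>t. axis i t) has_derivative (\<lambda>t. axis i t)) (at x)"
    using bounded_linear.has_derivative[OF bl_axis[of i] has_derivative_ident] by simp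
  then have "((\<lambda>t. (w - axis i (w$i)) + axis i t) has_derivative (\<lambda>t. axis i t)) (at x)"
    by (intro derivative_eq_intros) auto
  then show ?thesis unfolding vupd_axis .
qed

lemma coord_deriv:
  fixes g :: "complex^'m::finite \<Rightarrow> complex"
  assumes "holomorphic_several U g" "w \<in> U"
  shows "\<exists>ai. ((\<lambda>t. g (vupd w i t)) has_field_derivative ai) (at (w$i))"
proof -
  from assms obtain L where L: "(g has_derivative L) (at w)" and lin: "\<And>\<zeta> v. L (\<zeta> *s v) = \<zeta> * L v"
    unfolding holomorphic_several_def by blast
  have "((\<lambda>t. g (vupd w i t)) has_derivative (\<lambda>t. L (axis i t))) (at (w$i))"
    by (rule has_derivative_compose[OF vupd_deriv]) (simp add: L vupd_same)
  moreover have "(\<lambda>t. L (axis i t)) = (*) (L (axis i 1))"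
  proof
    fix t :: complex
    have "axis i t = t *s (axis i 1 :: complex^'m)" by (simp add: vec_eq_iff axis_def)
    then show "L (axis i t) = L (axis i 1) * t" by (simp add: lin mult.commute)
  qed
  ultimately show ?thesis unfolding has_field_derivative_def by auto
qed


lemma alg_core:
  fixes a :: "'m::finite \<Rightarrow> complex" and w :: "complex^'m" and zc :: complex and nz na \<rho> :: real
  assumes hnz: "nz = 1 + (cmod zc)^2 + (\<Sum>i\<in>UNIV. (cmod (w$i))^2)"
    and hna: "na = (\<Sum>i\<in>UNIV. (cmod (a i))^2)"
    and hr: "\<rho> * nz = 1 + na + (cmod ((\<Sum>k\<in>UNIV. a k * w$k) - zc))^2"
    and r0: "\<rho> \<noteq> 0"
  shows "\<forall>i k. (\<Sum>j\<in>UNIV. (((if i = j then 1 else 0) + a i * cnj (a j)) / complex_of_real nz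
              - (cnj (w$i) + cnj zc * a i) * (w$j + zc * cnj (a j)) / complex_of_real (nz^2)) *
             ((complex_of_real (\<rho> * nz) * (if j = k then 1 else 0) - a j * cnj (a k)
                        + cnj (w$j) * w$k * complex_of_real (1 + na)) / complex_of_real \<rho>
              - (a j * w$k * ((\<Sum>k\<in>UNIV. cnj (a k) * cnj (w$k)) - cnj zc)
                 + cnj (w$j) * cnj (a k) * ((\<Sum>k\<in>UNIV. a k * w$k) - zc)) / complex_of_real \<rho>))
         = (if i = k then 1 else 0)"
proof (intro allI)
  fix i k
  define N where "N = complex_of_real nz"
  define R where "R = complex_of_real \<rho>"
  define na' where "na' = complex_of_real na"
  define t where "t = (\<Sum>k\<in>UNIV. a k * w$k)"
  define tb where "tb = (\<Sum>k\<in>UNIV. cnj (a k) * cnj (w$k))"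
  define nw where "nw = (\<Sum>j\<in>UNIV. w$j * cnj (w$j))"
  define u where "u = cnj (w$i) + cnj zc * a i"
  define mu where "mu = a i/N - u*zc/N^2"
  define nu where "nu = - u/N^2"
  define be where "be = (- cnj (a k) - w$k*(tb - cnj zc))/R"
  define ga where "ga = (w$k*(1+na') - cnj (a k)*(t - zc))/R"
  have nzpos: "nz > 0" unfolding hnz by (intro add_pos_nonneg) (auto intro: sum_nonneg)
  then have N0: "N \<noteq> 0" unfolding N_def by simp
  have R0: "R \<noteq> 0" unfolding R_def using r0 by simp
  have cnj_t: "cnj (t - zc) = tb - cnj zc" unfolding t_def tb_def by (simp add: cnj_sum)
  have hN: "N = 1 + zc * cnj zc + nw"
    unfolding N_def hnz nw_def by (simp add: complex_norm_square[symmetric] of_real_sum)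
  have hna': "na' = (\<Sum>j\<in>UNIV. cnj (a j) * a j)"
    unfolding na'_def hna of_real_sum by (intro sum.cong refl) (metis complex_norm_square mult.commute)
  have hR: "R * N = 1 + na' + (t - zc) * (tb - cnj zc)"
  proof -
    have "R * N = complex_of_real (\<rho> * nz)" unfolding R_def N_def by simp
    also have "\<dots> = 1 + na' + complex_of_real ((cmod (t - zc))^2)" unfolding hr na'_def t_def by simp
    also have "complex_of_real ((cmod (t - zc))^2) = (t - zc) * (tb - cnj zc)"
      unfolding complex_norm_square cnj_t ..
    finally show ?thesis .
  qed
  have Gf: "((if i = j then 1 else 0) + a i * cnj (a j)) / complex_of_real nz
              - (cnj (w$i) + cnj zc * a i) * (w$j + zc * cnj (a j)) / complex_of_real (nz^2)
        = (if i = j then 1/N else 0) + cnj (a j) * mu + w$j * nu" for j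
    using N0 unfolding mu_def nu_def u_def N_def[symmetric] of_real_power
    by (auto simp: field_simps power2_eq_square)
  have Hf: "(complex_of_real (\<rho> * nz) * (if j = k then 1 else 0) - a j * cnj (a k)
                        + cnj (w$j) * w$k * complex_of_real (1 + na)) / complex_of_real \<rho>
              - (a j * w$k * ((\<Sum>k\<in>UNIV. cnj (a k) * cnj (w$k)) - cnj zc)
                 + cnj (w$j) * cnj (a k) * ((\<Sum>k\<in>UNIV. a k * w$k) - zc)) / complex_of_real \<rho>
        = (if j = k then N else 0) + a j * be + cnj (w$j) * ga" for j
    using R0 unfolding be_def ga_def t_def[symmetric] tb_def[symmetric] na'_def[symmetric] R_def[symmetric] N_def[symmetric]
      of_real_mult of_real_add
    by (auto simp: field_simps)
  have "(\<Sum>j\<in>UNIV. ((if i = j then 1/N else 0) + cnj (a j) * mu + w$j * nu) * ((if j = k then N else 0) + a j * be + cnj (w$j) * ga))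
     = (if i = k then 1/N*N else 0) + 1/N*a i*be + 1/N*cnj (w$i)*ga + mu*cnj (a k)*N + mu*be*(\<Sum>j\<in>UNIV. cnj (a j)*a j)
     + mu*ga*(\<Sum>j\<in>UNIV. cnj (a j)*cnj (w$j)) + nu*w$k*N + nu*be*(\<Sum>j\<in>UNIV. w$j*a j) + nu*ga*(\<Sum>j\<in>UNIV. w$j*cnj (w$j))"
    by (rule sum9)
  also have "\<dots> = (if i = k then 1 else 0) + ((1/N)*(a i*be + cnj (w$i)*ga) + mu*cnj (a k)*N + mu*be*na' + mu*ga*tb + nu*w$k*N + nu*be*t + nu*ga*nw)"
  proof -
    have st: "(\<Sum>j\<in>UNIV. w$j * a j) = t" unfolding t_def by (simp add: mult.commute)
    show ?thesis unfolding hna'[symmetric] tb_def[symmetric] nw_def[symmetric] st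
      using N0 by (simp add: distrib_left add.assoc mult.assoc)
  qed
  also have "(1/N)*(a i*be + cnj (w$i)*ga) + mu*cnj (a k)*N + mu*be*na' + mu*ga*tb + nu*w$k*N + nu*be*t + nu*ga*nw = 0"
    unfolding mu_def nu_def be_def ga_def u_def
    by (rule scal[OF N0 R0 _ hR]) (simp add: hN)
  finally show "(\<Sum>j\<in>UNIV. (((if i = j then 1 else 0) + a i * cnj (a j)) / complex_of_real nz
              - (cnj (w$i) + cnj zc * a i) * (w$j + zc * cnj (a j)) / complex_of_real (nz^2)) *
             ((complex_of_real (\<rho> * nz) * (if j = k then 1 else 0) - a j * cnj (a k)
                        + cnj (w$j) * w$k * complex_of_real (1 + na)) / complex_of_real \<rho>
              - (a j * w$k * ((\<Sum>k\<in>UNIV. cnj (a k) * cnj (w$k)) - cnj zc)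
                 + cnj (w$j) * cnj (a k) * ((\<Sum>k\<in>UNIV. a k * w$k) - zc)) / complex_of_real \<rho>))
         = (if i = k then 1 else 0)"
    unfolding Gf Hf by simp
qed


lemma gen1: "(X::real) > 0 \<Longrightarrow> n > 0 \<Longrightarrow> X * Q / (n * X) * n = Q" by (simp add: field_simps)
lemma gen2: "(X::real) > 0 \<Longrightarrow> n > 0 \<Longrightarrow> Q > 0 \<Longrightarrow> X * Q / (n * X) \<noteq> 0" by simp

lemma dZ0_eq:
  assumes "finite S" shows "dZ0 (hpoly S c) Z0 Z1 (W::complex^'m::finite) = P0 S c Z0 Z1 W"
proof -
  have "((\<lambda>x. hpoly S c x Z1 (vupd W k (W$k))) has_field_derivative
     (P0 S c Z0 Z1 (vupd W k (W$k)) * 1 + P1 S c Z0 Z1 (vupd W k (W$k)) * 0 + PW S c Z0 Z1 (vupd W k (W$k)) k * 0)) (at Z0)"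
    by (rule hpoly_deriv[OF assms DERIV_ident DERIV_const DERIV_const])
  hence "((\<lambda>x. hpoly S c x Z1 W) has_field_derivative P0 S c Z0 Z1 W) (at Z0)" by simp
  thus ?thesis unfolding dZ0_def by (rule DERIV_imp_deriv)
qed

lemma dZ1_eq:
  assumes "finite S" shows "dZ1 (hpoly S c) Z0 Z1 (W::complex^'m::finite) = P1 S c Z0 Z1 W"
proof -
  have "((\<lambda>x. hpoly S c Z0 x (vupd W k (W$k))) has_field_derivative
     (P0 S c Z0 Z1 (vupd W k (W$k)) * 0 + P1 S c Z0 Z1 (vupd W k (W$k)) * 1 + PW S c Z0 Z1 (vupd W k (W$k)) k * 0)) (at Z1)"
    by (rule hpoly_deriv[OF assms DERIV_const DERIV_ident DERIV_const])
  hence "((\<lambda>x. hpoly S c Z0 x W) has_field_derivative P1 S c Z0 Z1 W) (at Z1)" by simp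
  thus ?thesis unfolding dZ1_def by (rule DERIV_imp_deriv)
qed

lemma dW_eq:
  assumes "finite S" shows "dW (hpoly S c) Z0 Z1 (W::complex^'m::finite) k = PW S c Z0 Z1 W k"
proof -
  have "((\<lambda>x. hpoly S c Z0 Z1 (vupd W k x)) has_field_derivative
     (P0 S c Z0 Z1 (vupd W k (W$k)) * 0 + P1 S c Z0 Z1 (vupd W k (W$k)) * 0 + PW S c Z0 Z1 (vupd W k (W$k)) k * 1)) (at (W$k))"
    by (rule hpoly_deriv[OF assms DERIV_const DERIV_const DERIV_ident])
  hence "((\<lambda>x. hpoly S c Z0 Z1 (vupd W k x)) has_field_derivative PW S c Z0 Z1 W k) (at (W$k))" by simp
  thus ?thesis unfolding dW_def by (rule DERIV_imp_deriv)
qed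

theorem lemma2p1:
  fixes S :: "(nat \<times> nat \<times> ('m::finite \<Rightarrow> nat)) set"
    and c :: "nat \<times> nat \<times> ('m \<Rightarrow> nat) \<Rightarrow> complex"
    and d :: nat
    and F :: "complex \<Rightarrow> complex \<Rightarrow> complex^'m \<Rightarrow> complex"
    and U :: "(complex^'m) set"
    and g :: "complex^'m \<Rightarrow> complex"
  assumes F_def: "F = hpoly S c"
    and hom: "homogeneous_deg S d"
    and smooth: "smooth_hypersurface F"
    and U_open: "open U"
    and g_hol: "holomorphic_several U g"
    and graph: "\<forall>w\<in>U. F 1 (g w) w = 0"
    and F1_nz: "\<forall>w\<in>U. dZ1 F 1 (g w) w \<noteq> 0"
  shows "\<forall>w\<in>U.
    let z1 = g w;
        a = (\<lambda>i. deriv (\<lambda>t. g (vupd w i t)) (w$i));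
        F0 = dZ0 F 1 z1 w;
        F1 = dZ1 F 1 z1 w;
        Fk = (\<lambda>k. dW F 1 z1 w k);
        nz = 1 + (cmod z1)^2 + (\<Sum>i\<in>UNIV. (cmod (w$i))^2);
        na = (\<Sum>i\<in>UNIV. (cmod (a i))^2);
        \<rho> = ((cmod F0)^2 + (cmod F1)^2 + (\<Sum>k\<in>UNIV. (cmod (Fk k))^2)) / (nz * (cmod F1)^2);
        G = (\<lambda>i j. ((if i = j then 1 else 0) + a i * cnj (a j)) / complex_of_real nz
              - (cnj (w$i) + cnj z1 * a i) * (w$j + z1 * cnj (a j)) / complex_of_real (nz^2));
        Ginv = (\<lambda>i j. (complex_of_real (\<rho> * nz) * (if j = i then 1 else 0) - a j * cnj (a i)
                        + cnj (w$j) * w$i * complex_of_real (1 + na)) / complex_of_real \<rho>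
              - (a j * w$i * ((\<Sum>k\<in>UNIV. cnj (a k) * cnj (w$k)) - cnj z1)
                 + cnj (w$j) * cnj (a i) * ((\<Sum>k\<in>UNIV. a k * w$k) - z1)) / complex_of_real \<rho>)
    in \<forall>i k. (\<Sum>j\<in>UNIV. G i j * Ginv k j) = (if i = k then 1 else 0)"
  proof (intro ballI)
  fix w assume wU: "w \<in> U"
  have fin: "finite S" using hom unfolding homogeneous_deg_def by auto
  define z1 where "z1 = g w"
  define a where "a = (\<lambda>i. deriv (\<lambda>t. g (vupd w i t)) (w$i))"
  have a_eq: "deriv (\<lambda>t. g (vupd w i t)) (w$i) = a i" for i unfolding a_def by simp
  have ha: "((\<lambda>t. g (vupd w i t)) has_field_derivative a i) (at (w$i))" for i
  proof -
    obtain ai where ai: "((\<lambda>t. g (vupd w i t)) has_field_derivative ai) (at (w$i))"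
      using coord_deriv[OF g_hol wU] by blast
    then have "a i = ai" unfolding a_def by (simp add: DERIV_imp_deriv)
    with ai show ?thesis by simp
  qed
  define F1 where "F1 = P1 S c 1 z1 w"
  have e0: "dZ0 F 1 z1 w = P0 S c 1 z1 w" unfolding F_def by (rule dZ0_eq[OF fin])
  have e1: "dZ1 F 1 z1 w = F1" unfolding F_def F1_def by (rule dZ1_eq[OF fin])
  have eW: "dW F 1 z1 w k = PW S c 1 z1 w k" for k unfolding F_def by (rule dW_eq[OF fin])
  have F10: "F1 \<noteq> 0"
  proof -
    have "dZ1 F 1 z1 w \<noteq> 0" using F1_nz wU unfolding z1_def by blast
    then show ?thesis unfolding e1 .
  qed
  have impl: "F1 * a i + PW S c 1 z1 w i = 0" for i
  proof -
    have D: "((\<lambda>t. hpoly S c 1 (g (vupd w i t)) (vupd w i t)) has_field_derivative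
       (P0 S c 1 z1 w * 0 + F1 * a i + PW S c 1 z1 w i * 1)) (at (w$i))"
      using hpoly_deriv[OF fin DERIV_const[of 1] ha[of i] DERIV_ident, where c=c and W=w and k=i]
      by (simp add: z1_def F1_def)
    define T where "T = (\<lambda>t. vupd w i t) -` U"
    have oT: "open T" unfolding T_def
      by (rule continuous_open_vimage[OF U_open]) (rule has_derivative_continuous[OF vupd_deriv])
    have mT: "w$i \<in> T" unfolding T_def using wU by simp
    have "((\<lambda>t. 0) has_field_derivative (P0 S c 1 z1 w * 0 + F1 * a i + PW S c 1 z1 w i * 1)) (at (w$i))"
      by (rule has_field_derivative_transform_within_open[OF D oT mT]) (use graph F_def in \<open>auto simp: T_def\<close>)
    then have "P0 S c 1 z1 w * 0 + F1 * a i + PW S c 1 z1 w i * 1 = 0"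
      using DERIV_const DERIV_unique by blast
    then show ?thesis by simp
  qed
  have PWk: "PW S c 1 z1 w k = - F1 * a k" for k using impl[of k] by (simp add: algebra_simps eq_neg_iff_add_eq_0)
  have eul: "1 * P0 S c 1 z1 w + z1 * F1 + (\<Sum>k\<in>UNIV. w$k * PW S c 1 z1 w k) = 0"
    using euler[OF hom, of 1 c z1 w] graph wU unfolding F_def z1_def F1_def by simp
  have sW: "(\<Sum>k\<in>UNIV. w$k * PW S c 1 z1 w k) = - F1 * (\<Sum>k\<in>UNIV. a k * w$k)"
    unfolding PWk sum_distrib_left by (simp add: sum_negf algebra_simps)
  have P0e: "P0 S c 1 z1 w = F1 * ((\<Sum>k\<in>UNIV. a k * w$k) - z1)"
    using eul unfolding sW by (simp add: algebra_simps add_eq_0_iff2 eq_neg_iff_add_eq_0)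
  let ?nz = "1 + (cmod z1)^2 + (\<Sum>i\<in>UNIV. (cmod (w$i))^2)"
  let ?na = "\<Sum>i\<in>UNIV. (cmod (a i))^2"
  let ?rho = "((cmod (dZ0 F 1 z1 w))^2 + (cmod (dZ1 F 1 z1 w))^2 + (\<Sum>k\<in>UNIV. (cmod (dW F 1 z1 w k))^2)) / (?nz * (cmod (dZ1 F 1 z1 w))^2)"
  have nzpos: "?nz > 0" by (intro add_pos_nonneg) (auto intro: sum_nonneg)
  have f1pos: "(cmod F1)^2 > 0" using F10 by simp
  have num: "(cmod (dZ0 F 1 z1 w))^2 + (cmod (dZ1 F 1 z1 w))^2 + (\<Sum>k\<in>UNIV. (cmod (dW F 1 z1 w k))^2)
     = (cmod F1)^2 * (1 + ?na + (cmod ((\<Sum>k\<in>UNIV. a k * w$k) - z1))^2)"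
    unfolding e0 e1 eW P0e PWk
    by (simp only: mult_minus_left norm_minus_cancel norm_mult power_mult_distrib) (simp add: sum_distrib_left algebra_simps)
  have Qpos: "1 + ?na + (cmod ((\<Sum>k\<in>UNIV. a k * w$k) - z1))^2 > 0"
    by (intro add_pos_nonneg) (auto intro: sum_nonneg)
  have hr: "?rho * ?nz = 1 + ?na + (cmod ((\<Sum>k\<in>UNIV. a k * w$k) - z1))^2"
    unfolding num unfolding e1 by (rule gen1[OF f1pos nzpos])
  have r0: "?rho \<noteq> 0"
    unfolding num unfolding e1 by (rule gen2[OF f1pos nzpos Qpos])
  show "let z1 = g w;
        a = (\<lambda>i. deriv (\<lambda>t. g (vupd w i t)) (w$i));
        F0 = dZ0 F 1 z1 w;
        F1 = dZ1 F 1 z1 w;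
        Fk = (\<lambda>k. dW F 1 z1 w k);
        nz = 1 + (cmod z1)^2 + (\<Sum>i\<in>UNIV. (cmod (w$i))^2);
        na = (\<Sum>i\<in>UNIV. (cmod (a i))^2);
        \<rho> = ((cmod F0)^2 + (cmod F1)^2 + (\<Sum>k\<in>UNIV. (cmod (Fk k))^2)) / (nz * (cmod F1)^2);
        G = (\<lambda>i j. ((if i = j then 1 else 0) + a i * cnj (a j)) / complex_of_real nz
              - (cnj (w$i) + cnj z1 * a i) * (w$j + z1 * cnj (a j)) / complex_of_real (nz^2));
        Ginv = (\<lambda>i j. (complex_of_real (\<rho> * nz) * (if j = i then 1 else 0) - a j * cnj (a i)
                        + cnj (w$j) * w$i * complex_of_real (1 + na)) / complex_of_real \<rho>
              - (a j * w$i * ((\<Sum>k\<in>UNIV. cnj (a k) * cnj (w$k)) - cnj z1)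
                 + cnj (w$j) * cnj (a i) * ((\<Sum>k\<in>UNIV. a k * w$k) - z1)) / complex_of_real \<rho>)
    in \<forall>i k. (\<Sum>j\<in>UNIV. G i j * Ginv k j) = (if i = k then 1 else 0)"
    unfolding Let_def a_eq z1_def[symmetric]
    using alg_core[where a=a and w=w and zc=z1 and nz="?nz" and na="?na" and \<rho>="?rho", OF refl refl hr r0]
    by (simp only: simp_thms)
qed

end
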